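(* Let $m,n\ge 1$ and let $B\subseteq [m]\times[n]$ be a board. Let $I\subseteq[m]$ with $|I|=s$ and $J\subseteq[n]$ with $|J|=t$ be such that the subboard $S=B\cap(I\times J)$ is a block of $B$, i.e. (1) for all $i,i'\in I$ and all $c\in[n]\setminus J$: $(i,c)\in B \iff (i',c)\in B$; and (2) for all $a\in[m]\setminus I$ and all $j,j'\in J$: $(a,j)\in B\iff(a,j')\in B$. For $0\le j\le \min(s,t)$ and any choice of subsets $I'\subseteq I$, $J'\subseteq J$ with $|I'|=|J'|=j$, let $$B_{S,j}=\{(a,b)\in B:\ a\notin I',\ b\notin J',\ (a,b)\notin I\times J\}$$ (the $j$-th inclusion board of $B$ relative to $S$). Then $R(B_{S,j};x)$ does not depend on the choice of $I',J'$, and $$R(B;x)=\sum_{j=0}^{\min(s,t)} r_j(S)\,x^j\,R(B_{S,j};x),$$ where $r_j(S)$ is the coefficient of $x^j$ in $R(S;x)$.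
   Context: A board is a finite set of cells $B\subseteq[m]\times[n]$ (rows indexed by $[m]=\{1,\dots,m\}$, columns by $[n]$). A placement of $k$ non-attacking rooks on $B$ is a set of $k$ cells $\{(x_1,y_1),\dots,(x_k,y_k)\}\subseteq B$ such that $x_i=x_j$ or $y_i=y_j$ implies $i=j$. For $k\ge 0$, $r_k(B)$ denotes the number of such placements (with $r_0(B)=1$), and the rook polynomial of $B$ is $R(B;x)=\sum_{k\ge 0} r_k(B)x^k$. The same definitions apply to any set of cells, in particular to $S$ and to $B_{S,j}$. *)

theory Defs
  imports "HOL-Computational_Algebra.Polynomial"
begin

type_synonym cell = "nat \<times> nat"

definition non_attacking :: "cell set \<Rightarrow> bool" where
  "non_attacking P \<longleftrightarrow>
     (\<forall>p\<in>P. \<forall>q\<in>P. (fst p = fst q \<or> snd p = snd q) \<longrightarrow> p = q)"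

definition placements :: "cell set \<Rightarrow> nat \<Rightarrow> cell set set" where
  "placements B k = {P. P \<subseteq> B \<and> finite P \<and> card P = k \<and> non_attacking P}"

definition rook_num :: "cell set \<Rightarrow> nat \<Rightarrow> nat" where
  "rook_num B k = card (placements B k)"

(* R(B;x) = sum_k r_k(B) x^k ; for a finite board r_k(B) = 0 when k > |B| *)
definition rook_poly :: "cell set \<Rightarrow> int poly" where
  "rook_poly B = (\<Sum>k\<le>card B. monom (int (rook_num B k)) k)"

definition inclusion_board ::
  "cell set \<Rightarrow> nat set \<Rightarrow> nat set \<Rightarrow> nat set \<Rightarrow> nat set \<Rightarrow> cell set" where
  "inclusion_board B I J I' J' =
     {(a, b) \<in> B. a \<notin> I' \<and> b \<notin> J' \<and> (a, b) \<notin> I \<times> J}"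

end

theory Submission
  imports Defs
begin

lemma placements_finite: "finite B \<Longrightarrow> finite (placements B k)"
  by (rule finite_subset[of _ "Pow B"]) (auto simp: placements_def)

lemma rook_num_big: "finite B \<Longrightarrow> card B < k \<Longrightarrow> rook_num B k = 0"
proof -
  assume f: "finite B" and c: "card B < k"
  have "placements B k = {}"
  proof (rule ccontr)
    assume "placements B k \<noteq> {}"
    then obtain P where "P \<subseteq> B" "card P = k" by (auto simp: placements_def)
    then have "k \<le> card B" using card_mono[OF f] by auto
    with c show False by simp
  qed
  then show ?thesis by (simp add: rook_num_def)
qed

lemma coeff_rook_poly: "finite B \<Longrightarrow> coeff (rook_poly B) k = int (rook_num B k)"
proof (cases "k \<le> card B")
  case True
  then show ?thesis unfolding rook_poly_def by (rule coeff_sum_monom)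
next
  case False
  assume "finite B"
  then have "rook_num B k = 0" using False rook_num_big by simp
  moreover have "coeff (rook_poly B) k = 0" using False
    unfolding rook_poly_def coeff_sum by (auto intro: sum.neutral)
  ultimately show ?thesis by simp
qed

lemma rook_poly_eqI: "finite B1 \<Longrightarrow> finite B2 \<Longrightarrow> (\<And>k. rook_num B1 k = rook_num B2 k)
   \<Longrightarrow> rook_poly B1 = rook_poly B2"
  by (rule poly_eqI) (simp add: coeff_rook_poly)

lemma rook_le:
  assumes "inj_on \<sigma> (fst ` B1)" "inj_on \<tau> (snd ` B1)"
    "(\<lambda>(a,b). (\<sigma> a, \<tau> b)) ` B1 \<subseteq> B2" "finite B2"
  shows "rook_num B1 k \<le> rook_num B2 k"
proof -
  let ?g = "\<lambda>(a,b). (\<sigma> a, \<tau> b)"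
  have ig: "inj_on ?g B1" using assms(1,2) unfolding inj_on_def by fastforce
  have "inj_on ((`) ?g) (placements B1 k)"
    unfolding inj_on_def placements_def using inj_on_image_eq_iff[OF ig] by blast
  moreover have "(`) ?g ` placements B1 k \<subseteq> placements B2 k"
  proof
    fix P' assume "P' \<in> (`) ?g ` placements B1 k"
    then obtain P where P: "P \<in> placements B1 k" and P': "P' = ?g ` P" by auto
    have sub: "P \<subseteq> B1" "finite P" "card P = k" "non_attacking P" using P by (auto simp: placements_def)
    have "card P' = k" using P' sub card_image[OF inj_on_subset[OF ig sub(1)]] by simp
    moreover have "non_attacking P'"
      unfolding non_attacking_def P'
    proof (intro ballI impI)
      fix p q assume pq: "p \<in> ?g ` P" "q \<in> ?g ` P" "fst p = fst q \<or> snd p = snd q"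
      then obtain p0 q0 where "p0 \<in> P" "q0 \<in> P" "p = ?g p0" "q = ?g q0" by auto
      have fg: "fst (?g x) = \<sigma> (fst x)" "snd (?g x) = \<tau> (snd x)" for x by (cases x, simp)+
      have m: "fst p0 \<in> fst ` B1" "fst q0 \<in> fst ` B1" "snd p0 \<in> snd ` B1" "snd q0 \<in> snd ` B1"
        using \<open>p0 \<in> P\<close> \<open>q0 \<in> P\<close> sub(1) by auto
      have "\<sigma> (fst p0) = \<sigma> (fst q0) \<or> \<tau> (snd p0) = \<tau> (snd q0)"
        using pq(3) \<open>p = ?g p0\<close> \<open>q = ?g q0\<close> fg by metis
      then have "fst p0 = fst q0 \<or> snd p0 = snd q0"
        using inj_onD[OF assms(1) _ m(1,2)] inj_onD[OF assms(2) _ m(3,4)] by blast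
      with sub(4) \<open>p0 \<in> P\<close> \<open>q0 \<in> P\<close> have "p0 = q0" unfolding non_attacking_def by blast
      then show "p = q" using \<open>p = ?g p0\<close> \<open>q = ?g q0\<close> by simp
    qed
    ultimately show "P' \<in> placements B2 k" using P' sub assms(3) by (auto simp: placements_def)
  qed
  ultimately show ?thesis unfolding rook_num_def
    by (rule card_inj_on_le) (rule placements_finite[OF assms(4)])
qed


lemma perm_aux:
  assumes "finite I" "I1 \<subseteq> I" "I2 \<subseteq> I" "card I1 = card I2"
  obtains \<sigma> where "inj_on \<sigma> (- I1)" "\<And>a. a \<in> I - I1 \<Longrightarrow> \<sigma> a \<in> I - I2"
    "\<And>a. a \<notin> I \<Longrightarrow> \<sigma> a = a"
proof -
  have "card (I - I1) = card (I - I2)"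
    using assms by (simp add: card_Diff_subset finite_subset)
  then obtain f where f: "bij_betw f (I - I1) (I - I2)"
    using finite_same_card_bij assms(1) by blast
  define \<sigma> where "\<sigma> a = (if a \<in> I then f a else a)" for a
  have m: "\<sigma> a \<in> I - I2" if "a \<in> I - I1" for a
    using f that unfolding \<sigma>_def bij_betw_def by auto
  have "inj_on \<sigma> (- I1)"
  proof (rule inj_onI)
    fix x y assume xy: "x \<in> - I1" "y \<in> - I1" "\<sigma> x = \<sigma> y"
    show "x = y"
    proof (cases "x \<in> I"; cases "y \<in> I")
      assume "x \<in> I" "y \<in> I"
      then show ?thesis using xy f unfolding \<sigma>_def bij_betw_def inj_on_def by auto
    next
      assume "x \<in> I" "y \<notin> I"
      then show ?thesis using xy m[of x] unfolding \<sigma>_def by auto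
    next
      assume "x \<notin> I" "y \<in> I"
      then show ?thesis using xy m[of y] unfolding \<sigma>_def by auto
    next
      assume "x \<notin> I" "y \<notin> I"
      then show ?thesis using xy unfolding \<sigma>_def by auto
    qed
  qed
  then show ?thesis using that m unfolding \<sigma>_def by auto
qed

lemma inc_le:
  fixes B :: "cell set"
  assumes B: "B \<subseteq> {1..m} \<times> {1..n}"
    and block1: "\<forall>i\<in>I. \<forall>i'\<in>I. \<forall>c\<in>{1..n} - J. ((i, c) \<in> B \<longleftrightarrow> (i', c) \<in> B)"
    and block2: "\<forall>a\<in>{1..m} - I. \<forall>j\<in>J. \<forall>j'\<in>J. ((a, j) \<in> B \<longleftrightarrow> (a, j') \<in> B)"
    and fI: "finite I" and fJ: "finite J"
    and I12: "I1 \<subseteq> I" "I2 \<subseteq> I" "card I1 = card I2"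
    and J12: "J1 \<subseteq> J" "J2 \<subseteq> J" "card J1 = card J2"
  shows "rook_num (inclusion_board B I J I1 J1) k \<le> rook_num (inclusion_board B I J I2 J2) k"
proof -
  obtain \<sigma> where s: "inj_on \<sigma> (- I1)" "\<And>a. a \<in> I - I1 \<Longrightarrow> \<sigma> a \<in> I - I2"
    "\<And>a. a \<notin> I \<Longrightarrow> \<sigma> a = a" using perm_aux[OF fI I12] by blast
  obtain \<tau> where t: "inj_on \<tau> (- J1)" "\<And>a. a \<in> J - J1 \<Longrightarrow> \<tau> a \<in> J - J2"
    "\<And>a. a \<notin> J \<Longrightarrow> \<tau> a = a" using perm_aux[OF fJ J12] by blast
  let ?B1 = "inclusion_board B I J I1 J1"
  let ?B2 = "inclusion_board B I J I2 J2"
  have "fst ` ?B1 \<subseteq> - I1" "snd ` ?B1 \<subseteq> - J1" unfolding inclusion_board_def by auto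
  then have inj: "inj_on \<sigma> (fst ` ?B1)" "inj_on \<tau> (snd ` ?B1)"
    using s(1) t(1) inj_on_subset by blast+
  have fin: "finite ?B2"
    by (rule finite_subset[of _ "{1..m} \<times> {1..n}"]) (use B in \<open>auto simp: inclusion_board_def\<close>)
  have img: "(\<lambda>(a,b). (\<sigma> a, \<tau> b)) ` ?B1 \<subseteq> ?B2"
  proof
    fix p assume "p \<in> (\<lambda>(a,b). (\<sigma> a, \<tau> b)) ` ?B1"
    then obtain a b where ab: "(a,b) \<in> B" "a \<notin> I1" "b \<notin> J1" "(a,b) \<notin> I \<times> J"
      and p: "p = (\<sigma> a, \<tau> b)" unfolding inclusion_board_def by auto
    have rng: "a \<in> {1..m}" "b \<in> {1..n}" using ab(1) B by auto
    show "p \<in> ?B2"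
    proof (cases "a \<in> I")
      case True
      then have "b \<notin> J" using ab by auto
      have "\<sigma> a \<in> I - I2" using s(2) True ab(2) by auto
      moreover have "(\<sigma> a, b) \<in> B" using block1 True \<open>\<sigma> a \<in> I - I2\<close> \<open>b \<notin> J\<close> rng ab(1) by blast
      ultimately show ?thesis using p t(3)[OF \<open>b \<notin> J\<close>] \<open>b \<notin> J\<close> J12
        unfolding inclusion_board_def by auto
    next
      case False
      show ?thesis
      proof (cases "b \<in> J")
        case True
        have "\<tau> b \<in> J - J2" using t(2) True ab(3) by auto
        moreover have "(a, \<tau> b) \<in> B" using block2 False True \<open>\<tau> b \<in> J - J2\<close> rng ab(1) by blast
        ultimately show ?thesis using p s(3)[OF False] False I12
          unfolding inclusion_board_def by auto
      next
        case False2: False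
        show ?thesis using p s(3)[OF False] t(3)[OF False2] False False2 I12 J12 ab
          unfolding inclusion_board_def by auto
      qed
    qed
  qed
  show ?thesis by (rule rook_le[OF inj img fin])
qed


lemma non_attacking_subset: "non_attacking P \<Longrightarrow> R \<subseteq> P \<Longrightarrow> non_attacking R"
  unfolding non_attacking_def by blast

lemma fiber:
  fixes B :: "cell set"
  assumes fB: "finite B" and Q: "Q \<in> placements (B \<inter> (I \<times> J)) j" and jk: "j \<le> k"
  shows "card {P \<in> placements B k. P \<inter> (I \<times> J) = Q}
         = rook_num (inclusion_board B I J (fst ` Q) (snd ` Q)) (k - j)"
proof -
  let ?BQ = "inclusion_board B I J (fst ` Q) (snd ` Q)"
  let ?F = "{P \<in> placements B k. P \<inter> (I \<times> J) = Q}"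
  have Qp: "Q \<subseteq> B" "Q \<subseteq> I \<times> J" "finite Q" "card Q = j" "non_attacking Q"
    using Q by (auto simp: placements_def)
  have "bij_betw (\<lambda>R. Q \<union> R) (placements ?BQ (k - j)) ?F"
  proof (rule bij_betw_byWitness[where f' = "\<lambda>P. P - I \<times> J"])
    show "\<forall>R\<in>placements ?BQ (k - j). Q \<union> R - I \<times> J = R"
      using Qp(2) by (auto simp: placements_def inclusion_board_def)
    show "\<forall>P\<in>?F. Q \<union> (P - I \<times> J) = P" by auto
    show "(\<lambda>R. Q \<union> R) ` placements ?BQ (k - j) \<subseteq> ?F"
    proof
      fix P assume "P \<in> (\<lambda>R. Q \<union> R) ` placements ?BQ (k - j)"
      then obtain R where R: "R \<in> placements ?BQ (k - j)" and P: "P = Q \<union> R" by auto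
      have Rp: "R \<subseteq> ?BQ" "finite R" "card R = k - j" "non_attacking R"
        using R by (auto simp: placements_def)
      have disj: "Q \<inter> R = {}" using Rp(1) Qp(2) by (auto simp: inclusion_board_def)
      have sub: "P \<subseteq> B" using P Rp(1) Qp(1) by (auto simp: inclusion_board_def)
      have card: "card P = k" using P card_Un_disjoint[OF Qp(3) Rp(2) disj] Qp(4) Rp(3) jk by simp
      have na: "non_attacking P"
        unfolding non_attacking_def
      proof (intro ballI impI)
        fix p q assume pq: "p \<in> P" "q \<in> P" "fst p = fst q \<or> snd p = snd q"
        have cross: False if "p \<in> Q" "q \<in> R" "fst p = fst q \<or> snd p = snd q" for p q
        proof -
          have "q \<in> ?BQ" using that(2) Rp(1) by blast
          then have "fst q \<notin> fst ` Q" "snd q \<notin> snd ` Q"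
            by (cases q; simp add: inclusion_board_def)+
          then show False using that(1,3) by (metis image_eqI)
        qed
        show "p = q"
        proof (cases "p \<in> Q")
          case True
          show ?thesis
          proof (cases "q \<in> Q")
            case True
            then show ?thesis using \<open>p \<in> Q\<close> pq(3) Qp(5) unfolding non_attacking_def by blast
          next
            case False
            then have "q \<in> R" using pq P by auto
            then show ?thesis using cross[OF \<open>p \<in> Q\<close> _ pq(3)] by blast
          qed
        next
          case False
          then have "p \<in> R" using pq P by auto
          show ?thesis
          proof (cases "q \<in> Q")
            case True
            then show ?thesis using cross[OF True \<open>p \<in> R\<close>] pq(3) by auto
          next
            case False
            then have "q \<in> R" using pq P by auto
            then show ?thesis using \<open>p \<in> R\<close> pq(3) Rp(4) unfolding non_attacking_def by blast
          qed
        qed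
      qed
      have "P \<inter> (I \<times> J) = Q" using P Qp(2) Rp(1) by (auto simp: inclusion_board_def)
      then show "P \<in> ?F" using sub card na P Qp(3) Rp(2) by (auto simp: placements_def)
    qed
    show "(\<lambda>P. P - I \<times> J) ` ?F \<subseteq> placements ?BQ (k - j)"
    proof
      fix R assume "R \<in> (\<lambda>P. P - I \<times> J) ` ?F"
      then obtain P where P: "P \<in> placements B k" "P \<inter> (I \<times> J) = Q" and R: "R = P - I \<times> J" by auto
      have Pp: "P \<subseteq> B" "finite P" "card P = k" "non_attacking P"
        using P(1) by (auto simp: placements_def)
      have "R \<subseteq> ?BQ"
      proof
        fix c assume c: "c \<in> R"
        obtain a b where ab: "c = (a, b)" by (cases c)
        have "a \<notin> fst ` Q"
        proof
          assume "a \<in> fst ` Q"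
          then obtain q where q: "q \<in> Q" "fst q = a" by auto
          then have "q \<in> P" using P(2) by auto
          then have "q = c" using Pp(4) c R q ab unfolding non_attacking_def by auto
          then show False using q(1) Qp(2) c R by auto
        qed
        moreover have "b \<notin> snd ` Q"
        proof
          assume "b \<in> snd ` Q"
          then obtain q where q: "q \<in> Q" "snd q = b" by auto
          then have "q \<in> P" using P(2) by auto
          then have "q = c" using Pp(4) c R q ab unfolding non_attacking_def by auto
          then show False using q(1) Qp(2) c R by auto
        qed
        ultimately show "c \<in> ?BQ" using c R ab Pp(1) by (auto simp: inclusion_board_def)
      qed
      moreover have "card R = k - j"
      proof -
        have "P = Q \<union> R" "Q \<inter> R = {}" using P(2) R by auto
        then have "card P = card Q + card R" using card_Un_disjoint Pp(2) by (metis finite_Un)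
        then show ?thesis using Pp(3) Qp(4) by simp
      qed
      ultimately show "R \<in> placements ?BQ (k - j)"
        using R Pp non_attacking_subset[OF Pp(4)] by (auto simp: placements_def)
    qed
  qed
  then show ?thesis unfolding rook_num_def by (simp add: bij_betw_same_card)
qed


lemma decomp:
  fixes B :: "cell set"
  assumes fB: "finite B"
  shows "rook_num B k = (\<Sum>j\<le>k. \<Sum>Q\<in>placements (B \<inter> (I \<times> J)) j.
            rook_num (inclusion_board B I J (fst ` Q) (snd ` Q)) (k - j))"
proof -
  let ?S = "B \<inter> (I \<times> J)"
  define F where "F Q = {P \<in> placements B k. P \<inter> (I \<times> J) = Q}" for Q
  let ?QS = "\<Union> (placements ?S ` {..k})"
  have fS: "finite ?S" using fB by simp
  have PB: "placements B k = \<Union> (F ` ?QS)"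
  proof
    show "placements B k \<subseteq> \<Union> (F ` ?QS)"
    proof
      fix P assume P: "P \<in> placements B k"
      have Pp: "P \<subseteq> B" "finite P" "card P = k" "non_attacking P"
        using P by (auto simp: placements_def)
      let ?Q = "P \<inter> (I \<times> J)"
      have "card ?Q \<le> k" using Pp card_mono[of P ?Q] by auto
      moreover have "?Q \<in> placements ?S (card ?Q)"
        using Pp non_attacking_subset[OF Pp(4)] by (auto simp: placements_def)
      ultimately have "?Q \<in> ?QS" by auto
      moreover have "P \<in> F ?Q" using P by (simp add: F_def)
      ultimately show "P \<in> \<Union> (F ` ?QS)" by blast
    qed
    show "\<Union> (F ` ?QS) \<subseteq> placements B k" by (auto simp: F_def)
  qed
  have "card (\<Union> (F ` ?QS)) = (\<Sum>Q\<in>?QS. card (F Q))"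
  proof (rule card_UN_disjoint)
    show "finite ?QS" using placements_finite[OF fS] by auto
    show "\<forall>Q\<in>?QS. finite (F Q)" using placements_finite[OF fB] by (auto simp: F_def)
    show "\<forall>Q\<in>?QS. \<forall>Q'\<in>?QS. Q \<noteq> Q' \<longrightarrow> F Q \<inter> F Q' = {}" by (auto simp: F_def)
  qed
  also have "\<dots> = (\<Sum>j\<le>k. \<Sum>Q\<in>placements ?S j. card (F Q))"
  proof (rule sum.UNION_disjoint)
    show "finite {..k}" by simp
    show "\<forall>j\<in>{..k}. finite (placements ?S j)" using placements_finite[OF fS] by auto
    show "\<forall>i\<in>{..k}. \<forall>j\<in>{..k}. i \<noteq> j \<longrightarrow> placements ?S i \<inter> placements ?S j = {}"
      by (auto simp: placements_def)
  qed
  also have "\<dots> = (\<Sum>j\<le>k. \<Sum>Q\<in>placements ?S j.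
            rook_num (inclusion_board B I J (fst ` Q) (snd ` Q)) (k - j))"
    by (intro sum.cong refl) (simp add: F_def fiber[OF fB])
  finally show ?thesis using PB by (simp add: rook_num_def)
qed

lemma card_rows:
  assumes "Q \<in> placements S j"
  shows "card (fst ` Q) = j" "card (snd ` Q) = j"
proof -
  have Qp: "finite Q" "card Q = j" "non_attacking Q" using assms by (auto simp: placements_def)
  have "inj_on fst Q" "inj_on snd Q" using Qp(3) unfolding non_attacking_def inj_on_def by blast+
  then show "card (fst ` Q) = j" "card (snd ` Q) = j" using Qp(2) by (simp_all add: card_image)
qed

theorem theorem3:
  fixes m n s t :: nat and B :: "cell set" and I J :: "nat set"
  assumes "m \<ge> 1" and "n \<ge> 1"
    and "B \<subseteq> {1..m} \<times> {1..n}"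
    and "I \<subseteq> {1..m}" and "card I = s"
    and "J \<subseteq> {1..n}" and "card J = t"
    and block1: "\<forall>i\<in>I. \<forall>i'\<in>I. \<forall>c\<in>{1..n} - J. ((i, c) \<in> B \<longleftrightarrow> (i', c) \<in> B)"
    and block2: "\<forall>a\<in>{1..m} - I. \<forall>j\<in>J. \<forall>j'\<in>J. ((a, j) \<in> B \<longleftrightarrow> (a, j') \<in> B)"
  shows "(\<forall>j\<le>min s t. \<forall>I1 J1 I2 J2.
            I1 \<subseteq> I \<and> J1 \<subseteq> J \<and> card I1 = j \<and> card J1 = j \<and>
            I2 \<subseteq> I \<and> J2 \<subseteq> J \<and> card I2 = j \<and> card J2 = j \<longrightarrow>
            rook_poly (inclusion_board B I J I1 J1) = rook_poly (inclusion_board B I J I2 J2))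
       \<and> (\<forall>Ic Jc :: nat \<Rightarrow> nat set.
            (\<forall>j\<le>min s t. Ic j \<subseteq> I \<and> Jc j \<subseteq> J \<and> card (Ic j) = j \<and> card (Jc j) = j) \<longrightarrow>
            rook_poly B = (\<Sum>j\<le>min s t.
               smult (coeff (rook_poly (B \<inter> (I \<times> J))) j)
                 (monom 1 j * rook_poly (inclusion_board B I J (Ic j) (Jc j)))))"
proof -
  have fB: "finite B" by (rule finite_subset[OF assms(3)]) simp
  have fI: "finite I" by (rule finite_subset[OF assms(4)]) simp
  have fJ: "finite J" by (rule finite_subset[OF assms(6)]) simp
  have finc: "finite (inclusion_board B I J I' J')" for I' J'
    by (rule finite_subset[OF _ fB]) (auto simp: inclusion_board_def)
  have eqn: "rook_num (inclusion_board B I J I1 J1) k = rook_num (inclusion_board B I J I2 J2) k"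
    if "I1 \<subseteq> I" "J1 \<subseteq> J" "I2 \<subseteq> I" "J2 \<subseteq> J" "card I1 = card I2" "card J1 = card J2" for I1 J1 I2 J2 k
    using inc_le[OF assms(3) block1 block2 fI fJ, of I1 I2 J1 J2 k]
      inc_le[OF assms(3) block1 block2 fI fJ, of I2 I1 J2 J1 k] that by simp
  show ?thesis
  proof (intro conjI allI impI)
    fix j I1 J1 I2 J2
    assume "I1 \<subseteq> I \<and> J1 \<subseteq> J \<and> card I1 = j \<and> card J1 = j \<and>
            I2 \<subseteq> I \<and> J2 \<subseteq> J \<and> card I2 = j \<and> card J2 = j"
    then have h: "I1 \<subseteq> I" "J1 \<subseteq> J" "I2 \<subseteq> I" "J2 \<subseteq> J" "card I1 = card I2" "card J1 = card J2"
      by auto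
    show "rook_poly (inclusion_board B I J I1 J1) = rook_poly (inclusion_board B I J I2 J2)"
      by (rule rook_poly_eqI[OF finc finc]) (rule eqn[OF h])
  next
    fix Ic Jc :: "nat \<Rightarrow> nat set"
    assume H: "\<forall>j\<le>min s t. Ic j \<subseteq> I \<and> Jc j \<subseteq> J \<and> card (Ic j) = j \<and> card (Jc j) = j"
    let ?S = "B \<inter> (I \<times> J)"
    let ?M = "min s t"
    have fS: "finite ?S" using fB by simp
    show "rook_poly B = (\<Sum>j\<le>?M.
               smult (coeff (rook_poly ?S) j)
                 (monom 1 j * rook_poly (inclusion_board B I J (Ic j) (Jc j))))"
    proof (rule poly_eqI)
      fix k
      define g where "g j = (if j \<le> ?M then rook_num ?S j *
          rook_num (inclusion_board B I J (Ic j) (Jc j)) (k - j) else 0)" for j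
      have inner: "(\<Sum>Q\<in>placements ?S j. rook_num (inclusion_board B I J (fst ` Q) (snd ` Q)) (k - j))
          = g j" for j
      proof (cases "j \<le> ?M")
        case True
        have "(\<Sum>Q\<in>placements ?S j. rook_num (inclusion_board B I J (fst ` Q) (snd ` Q)) (k - j))
            = (\<Sum>Q\<in>placements ?S j. rook_num (inclusion_board B I J (Ic j) (Jc j)) (k - j))"
        proof (rule sum.cong[OF refl])
          fix Q assume Q: "Q \<in> placements ?S j"
          have q1: "fst ` Q \<subseteq> I" "snd ` Q \<subseteq> J" using Q by (auto simp: placements_def)
          have Hj: "Ic j \<subseteq> I" "Jc j \<subseteq> J" "card (Ic j) = j" "card (Jc j) = j"
            using H True by blast+
          have q2: "card (fst ` Q) = card (Ic j)" "card (snd ` Q) = card (Jc j)"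
            using card_rows[OF Q] Hj by simp_all
          show "rook_num (inclusion_board B I J (fst ` Q) (snd ` Q)) (k - j)
              = rook_num (inclusion_board B I J (Ic j) (Jc j)) (k - j)"
            by (rule eqn[OF q1(1,2) Hj(1,2) q2])
        qed
        then show ?thesis using True by (simp add: g_def rook_num_def)
      next
        case False
        have "placements ?S j = {}"
        proof (rule ccontr)
          assume "placements ?S j \<noteq> {}"
          then obtain Q where Q: "Q \<in> placements ?S j" by auto
          have q1: "fst ` Q \<subseteq> I" "snd ` Q \<subseteq> J" using Q by (auto simp: placements_def)
          have "card (fst ` Q) \<le> card I" "card (snd ` Q) \<le> card J"
            by (rule card_mono[OF fI q1(1)], rule card_mono[OF fJ q1(2)])
          then have "j \<le> s" "j \<le> t" using card_rows[OF Q] assms(5,7) by simp_all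
          then show False using False by simp
        qed
        then show ?thesis using False by (auto simp: g_def)
      qed
      have "coeff (rook_poly B) k = int (\<Sum>j\<le>k. g j)"
        using coeff_rook_poly[OF fB] decomp[OF fB, of k I J] inner by simp
      also have "\<dots> = int (\<Sum>j\<le>min k ?M. g j)"
        by (rule arg_cong[where f = int], rule sum.mono_neutral_cong_right) (auto simp: g_def)
      also have "\<dots> = (\<Sum>j\<le>?M. coeff (smult (coeff (rook_poly ?S) j)
                 (monom 1 j * rook_poly (inclusion_board B I J (Ic j) (Jc j)))) k)"
      proof -
        have "(\<Sum>j\<le>?M. coeff (smult (coeff (rook_poly ?S) j)
                 (monom 1 j * rook_poly (inclusion_board B I J (Ic j) (Jc j)))) k)
            = (\<Sum>j\<le>?M. int (if j \<le> k then g j else 0))"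
          by (intro sum.cong refl) (auto simp: coeff_monom_mult coeff_rook_poly fS finc g_def)
        also have "\<dots> = (\<Sum>j\<le>min k ?M. int (g j))"
          by (rule sym, rule sum.mono_neutral_cong_left) auto
        finally show ?thesis by simp
      qed
      finally show "coeff (rook_poly B) k = coeff (\<Sum>j\<le>?M. smult (coeff (rook_poly ?S) j)
                 (monom 1 j * rook_poly (inclusion_board B I J (Ic j) (Jc j)))) k"
        by (simp add: coeff_sum)
    qed
  qed
qed

end
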